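(* Let $W$ be a finite set of possible worlds and let $\bullet$ be an operator assigning to every pair $(G_1,G_2)$ of belief algebras on $W$ a belief algebra $G_1\bullet G_2$, satisfying the postulates (RA1)–(RA4) described in the context. Let $G_1=(2^W,\gg_1)$ and $G_2=(2^W,\gg_2)$ be complete belief algebras, and let $$\Lambda(G_1,G_2)=\{(\{\omega\},\{\omega'\})\mid \{\omega\}\gg_1\{\omega'\},\ I_2(\{\omega\})=I_2(\{\omega'\})\},$$ where $I_2$ denotes the support with respect to the backbone of $G_2$. Then $G_1\bullet G_2=\operatorname{Gen}(\Lambda(G_1,G_2)\cup G_2)$, and the result of revising $G_1$ by $G_2$ is unique.
   Context: $W$ is a finite nonempty set. Let $R_W=\{(U,V)\mid U,V\subseteq W,\ U\cap V=\varnothing\}$. A belief algebra on $W$ is a pair $(2^W,\gg)$, where $\gg$ is a binary relation on $2^W$ satisfying, for all $U,V,U_1,V_1,U_2,V_2\subseteq W$: (A0) $\gg\subseteq R_W$; (A1) $U\gg\varnothing$ iff $U\neq\varnothing$; (A2) if $U\gg V$ then not $V\gg U$; (A3) if $U_1\supseteq U$, $U\gg V$, $V\supseteq V_1$ and $U_1\cap V_1=\varnothing$, then $U_1\gg V_1$; (A4) if $U=U_1\cup V_1=U_2\cup V_2$, $U_1\gg V_1$ and $U_2\gg V_2$, then $U_1\cap U_2\gg V_1\cup V_2$. A belief algebra is identified with its relation $\gg$ viewed as a set of pairs; $(U,V)\in G$ means $U\gg V$, and $\subseteq,\cup,\cap$ refer to these sets of pairs. For $\Omega\subseteq R_W$,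 $\operatorname{Gen}(\Omega)$ is the smallest subset of $R_W$ containing $\Omega$ and closed under: (i) it contains $(U,\varnothing)$ for every nonempty $U\subseteq W$; (ii) if $(U,V)$ is in it, $U\subseteq U_1$, $V_1\subseteq V$, $U_1\cap V_1=\varnothing$, then $(U_1,V_1)$ is in it; (iii) if $U_1\cup V_1=U_2\cup V_2$ and $(U_1,V_1),(U_2,V_2)$ are in it, then $(U_1\cap U_2,V_1\cup V_2)$ is in it. For a total preorder $\preceq$ on $W$ (with $\omega\prec\omega'$ iff $\omega\preceq\omega'$ and not $\omega'\preceq\omega$), the relation $U\gg V$ iff $U\cap V=\varnothing$ and there is $\omega_1\in U$ with $\omega_1\prec\omega_2$ for all $\omega_2\in V$ is a belief algebra; those arising this way are complete belief algebras (CBAs). Every belief algebra $(2^W,\gg)$ has a unique backbone: a sequence $U_1,\dots,U_n$ of nonempty pairwise disjoint sets with union $W$, with $U_i\gg U_{i+1}$ for $i<n$, such that for each $i$ any two disjoint nonempty subsets of $U_i$ are incomparable under $\gg$. For nonempty $V\subseteq W$, its support $I(V)$ is $U_i$ for the least $i$ with $V\cap U_i\neq\varnothing$. Postulates (for all belief algebras $G_1=(2^W,\gg_1)$, $G_2=(2^W,\gg_2)$): (RA1) $G_2\subseteq G_1\bullet G_2$. (RA2) There is $\Omega\subseteq G_1\cup G_2$ with $G_1\bullet G_2=\operatorname{Gen}(\Omega)$. (RA3) If $G_1,G_2$ are CBAs, then $G_1\bullet G_2$ is a CBA. (RA4) If $G_1,G_2$ are CBAs and $I_2(\{\omega\})=I_2(\{\omega'\})$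 (support w.r.t. the backbone of $G_2$), then $(\{\omega\},\{\omega'\})\in G_1\bullet G_2$ iff $\{\omega\}\gg_1\{\omega'\}$. *)

theory Defs
  imports Main
begin

type_synonym 'a balg = "('a set \<times> 'a set) set"

definition R_W :: "'a set \<Rightarrow> 'a balg" where
  "R_W W = {(U, V). U \<subseteq> W \<and> V \<subseteq> W \<and> U \<inter> V = {}}"

definition belief_algebra :: "'a set \<Rightarrow> 'a balg \<Rightarrow> bool" where
  "belief_algebra W G \<longleftrightarrow>
     G \<subseteq> R_W W \<and>
     (\<forall>U. U \<subseteq> W \<longrightarrow> ((U, {}) \<in> G \<longleftrightarrow> U \<noteq> {})) \<and>
     (\<forall>U V. U \<subseteq> W \<longrightarrow> V \<subseteq> W \<longrightarrow> (U, V) \<in> G \<longrightarrow> (V, U) \<notin> G) \<and>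
     (\<forall>U V U1 V1. U \<subseteq> W \<longrightarrow> V \<subseteq> W \<longrightarrow> U1 \<subseteq> W \<longrightarrow> V1 \<subseteq> W \<longrightarrow>
        U \<subseteq> U1 \<longrightarrow> (U, V) \<in> G \<longrightarrow> V1 \<subseteq> V \<longrightarrow> U1 \<inter> V1 = {} \<longrightarrow> (U1, V1) \<in> G) \<and>
     (\<forall>U U1 V1 U2 V2. U \<subseteq> W \<longrightarrow> U1 \<subseteq> W \<longrightarrow> V1 \<subseteq> W \<longrightarrow> U2 \<subseteq> W \<longrightarrow> V2 \<subseteq> W \<longrightarrow>
        U = U1 \<union> V1 \<longrightarrow> U = U2 \<union> V2 \<longrightarrow> (U1, V1) \<in> G \<longrightarrow> (U2, V2) \<in> G \<longrightarrow>
        (U1 \<inter> U2, V1 \<union> V2) \<in> G)"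

inductive_set Gen :: "'a set \<Rightarrow> 'a balg \<Rightarrow> 'a balg" for W :: "'a set" and \<Omega> :: "'a balg" where
  base: "p \<in> \<Omega> \<Longrightarrow> p \<in> Gen W \<Omega>"
| empty: "U \<subseteq> W \<Longrightarrow> U \<noteq> {} \<Longrightarrow> (U, {}) \<in> Gen W \<Omega>"
| mono: "(U, V) \<in> Gen W \<Omega> \<Longrightarrow> U \<subseteq> U1 \<Longrightarrow> U1 \<subseteq> W \<Longrightarrow> V1 \<subseteq> V \<Longrightarrow> U1 \<inter> V1 = {}
          \<Longrightarrow> (U1, V1) \<in> Gen W \<Omega>"
| meet: "U1 \<union> V1 = U2 \<union> V2 \<Longrightarrow> (U1, V1) \<in> Gen W \<Omega> \<Longrightarrow> (U2, V2) \<in> Gen W \<Omega>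
          \<Longrightarrow> (U1 \<inter> U2, V1 \<union> V2) \<in> Gen W \<Omega>"

definition total_preorder_on :: "'a set \<Rightarrow> 'a rel \<Rightarrow> bool" where
  "total_preorder_on W r \<longleftrightarrow> r \<subseteq> W \<times> W \<and> refl_on W r \<and> trans r \<and> total_on W r"

definition alg_of_preorder :: "'a set \<Rightarrow> 'a rel \<Rightarrow> 'a balg" where
  "alg_of_preorder W r = {(U, V). U \<subseteq> W \<and> V \<subseteq> W \<and> U \<inter> V = {} \<and>
      (\<exists>w1\<in>U. \<forall>w2\<in>V. (w1, w2) \<in> r \<and> (w2, w1) \<notin> r)}"

definition CBA :: "'a set \<Rightarrow> 'a balg \<Rightarrow> bool" where
  "CBA W G \<longleftrightarrow> (\<exists>r. total_preorder_on W r \<and> G = alg_of_preorder W r)"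

definition is_backbone :: "'a set \<Rightarrow> 'a balg \<Rightarrow> 'a set list \<Rightarrow> bool" where
  "is_backbone W G Us \<longleftrightarrow>
     (\<forall>i < length Us. Us ! i \<noteq> {}) \<and>
     (\<forall>i < length Us. \<forall>j < length Us. i \<noteq> j \<longrightarrow> Us ! i \<inter> Us ! j = {}) \<and>
     \<Union>(set Us) = W \<and>
     (\<forall>i. Suc i < length Us \<longrightarrow> (Us ! i, Us ! Suc i) \<in> G) \<and>
     (\<forall>i < length Us. \<forall>X Y. X \<subseteq> Us ! i \<longrightarrow> Y \<subseteq> Us ! i \<longrightarrow> X \<noteq> {} \<longrightarrow> Y \<noteq> {} \<longrightarrow>
         X \<inter> Y = {} \<longrightarrow> (X, Y) \<notin> G \<and> (Y, X) \<notin> G)"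

definition backbone :: "'a set \<Rightarrow> 'a balg \<Rightarrow> 'a set list" where
  "backbone W G = (THE Us. is_backbone W G Us)"

definition support :: "'a set \<Rightarrow> 'a balg \<Rightarrow> 'a set \<Rightarrow> 'a set" where
  "support W G V = (let Us = backbone W G in
      Us ! (LEAST i. i < length Us \<and> V \<inter> Us ! i \<noteq> {}))"

definition RA1 :: "'a set \<Rightarrow> ('a balg \<Rightarrow> 'a balg \<Rightarrow> 'a balg) \<Rightarrow> bool" where
  "RA1 W rv \<longleftrightarrow> (\<forall>G1 G2. belief_algebra W G1 \<longrightarrow> belief_algebra W G2 \<longrightarrow> G2 \<subseteq> rv G1 G2)"

definition RA2 :: "'a set \<Rightarrow> ('a balg \<Rightarrow> 'a balg \<Rightarrow> 'a balg) \<Rightarrow> bool" where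
  "RA2 W rv \<longleftrightarrow> (\<forall>G1 G2. belief_algebra W G1 \<longrightarrow> belief_algebra W G2 \<longrightarrow>
      (\<exists>\<Omega>. \<Omega> \<subseteq> G1 \<union> G2 \<and> rv G1 G2 = Gen W \<Omega>))"

definition RA3 :: "'a set \<Rightarrow> ('a balg \<Rightarrow> 'a balg \<Rightarrow> 'a balg) \<Rightarrow> bool" where
  "RA3 W rv \<longleftrightarrow> (\<forall>G1 G2. CBA W G1 \<longrightarrow> CBA W G2 \<longrightarrow> CBA W (rv G1 G2))"

definition RA4 :: "'a set \<Rightarrow> ('a balg \<Rightarrow> 'a balg \<Rightarrow> 'a balg) \<Rightarrow> bool" where
  "RA4 W rv \<longleftrightarrow> (\<forall>G1 G2. CBA W G1 \<longrightarrow> CBA W G2 \<longrightarrow>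
      (\<forall>w\<in>W. \<forall>w'\<in>W. support W G2 {w} = support W G2 {w'} \<longrightarrow>
          (({w}, {w'}) \<in> rv G1 G2 \<longleftrightarrow> ({w}, {w'}) \<in> G1)))"

definition revision_operator :: "'a set \<Rightarrow> ('a balg \<Rightarrow> 'a balg \<Rightarrow> 'a balg) \<Rightarrow> bool" where
  "revision_operator W rv \<longleftrightarrow>
     (\<forall>G1 G2. belief_algebra W G1 \<longrightarrow> belief_algebra W G2 \<longrightarrow> belief_algebra W (rv G1 G2)) \<and>
     RA1 W rv \<and> RA2 W rv \<and> RA3 W rv \<and> RA4 W rv"

definition Lambda :: "'a set \<Rightarrow> 'a balg \<Rightarrow> 'a balg \<Rightarrow> 'a balg" where
  "Lambda W G1 G2 = {({w}, {w'}) | w w'. w \<in> W \<and> w' \<in> W \<and> ({w}, {w'}) \<in> G1 \<and>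
      support W G2 {w} = support W G2 {w'}}"

end

theory Submission
  imports Defs
begin

definition rk :: "'a set \<Rightarrow> 'a rel \<Rightarrow> 'a \<Rightarrow> nat" where
  "rk W r w = card {v\<in>W. (v,w)\<in>r \<and> (w,v)\<notin>r}"

definition ralg :: "'a set \<Rightarrow> ('a \<Rightarrow> nat) \<Rightarrow> 'a balg" where
  "ralg W f = {(U,V). U \<subseteq> W \<and> V \<subseteq> W \<and> U \<inter> V = {} \<and> (\<exists>a\<in>U. \<forall>b\<in>V. f a < f b)}"

definition Cs :: "'a set \<Rightarrow> ('a \<Rightarrow> nat) \<Rightarrow> 'a set list" where
  "Cs W f = map (\<lambda>k. {w\<in>W. f w = k}) (sorted_list_of_set (f ` W))"

lemma tp_tot:
  assumes "total_preorder_on W r" "a\<in>W" "b\<in>W" "(a,b)\<notin>r" shows "(b,a)\<in>r"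
proof (cases "a = b")
  case True
  have "refl_on W r" using assms(1) unfolding total_preorder_on_def by simp
  then show ?thesis using True assms(2) unfolding refl_on_def by simp
next
  case False
  have "total_on W r" using assms(1) unfolding total_preorder_on_def by simp
  then have "(a,b)\<in>r \<or> (b,a)\<in>r" using False assms(2,3) unfolding total_on_def by simp
  then show ?thesis using assms(4) by simp
qed

lemma rk_sub:
  assumes "total_preorder_on W r" "(a,b)\<in>r"
  shows "{v\<in>W. (v,a)\<in>r \<and> (a,v)\<notin>r} \<subseteq> {v\<in>W. (v,b)\<in>r \<and> (b,v)\<notin>r}"
proof -
  have tr: "trans r" using assms(1) unfolding total_preorder_on_def by simp
  show ?thesis
  proof
    fix v assume v: "v \<in> {v\<in>W. (v,a)\<in>r \<and> (a,v)\<notin>r}"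
    then have 1: "(v,b)\<in>r" using assms(2) tr unfolding trans_def by blast
    have "(b,v)\<notin>r"
    proof
      assume "(b,v)\<in>r"
      then have "(a,v)\<in>r" using assms(2) tr unfolding trans_def by blast
      then show False using v by blast
    qed
    then show "v \<in> {v\<in>W. (v,b)\<in>r \<and> (b,v)\<notin>r}" using v 1 by blast
  qed
qed

lemma rk_le:
  assumes "total_preorder_on W r" "finite W" "(a,b)\<in>r"
  shows "rk W r a \<le> rk W r b"
  unfolding rk_def by (rule card_mono) (use assms rk_sub[OF assms(1,3)] in auto)

lemma rk_less:
  assumes "total_preorder_on W r" "finite W" "a\<in>W" "(a,b)\<in>r" "(b,a)\<notin>r"
  shows "rk W r a < rk W r b"
  unfolding rk_def
proof (rule psubset_card_mono)
  show "finite {v \<in> W. (v, b) \<in> r \<and> (b, v) \<notin> r}" using assms by auto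
  have "refl_on W r" using assms(1) unfolding total_preorder_on_def by simp
  then have "(a,a)\<in>r" using assms(3) unfolding refl_on_def by simp
  then show "{v \<in> W. (v, a) \<in> r \<and> (a, v) \<notin> r} \<subset> {v \<in> W. (v, b) \<in> r \<and> (b, v) \<notin> r}"
    using rk_sub[OF assms(1,4)] assms by blast
qed

lemma rk_less_iff:
  assumes "total_preorder_on W r" "finite W" "a\<in>W" "b\<in>W"
  shows "rk W r a < rk W r b \<longleftrightarrow> (a,b)\<in>r \<and> (b,a)\<notin>r"
proof
  assume "rk W r a < rk W r b"
  moreover have "\<not> ((a,b)\<in>r \<and> (b,a)\<notin>r) \<Longrightarrow> rk W r b \<le> rk W r a"
    using rk_le[OF assms(1,2)] tp_tot[OF assms(1,3,4)] by blast
  ultimately show "(a,b)\<in>r \<and> (b,a)\<notin>r" by linarith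
next
  assume "(a,b)\<in>r \<and> (b,a)\<notin>r"
  then show "rk W r a < rk W r b" using rk_less[OF assms(1,2,3)] by blast
qed

lemma cba_ralg:
  assumes "finite W" "CBA W G" shows "\<exists>f. G = ralg W f"
proof -
  obtain r where r: "total_preorder_on W r" "G = alg_of_preorder W r"
    using assms unfolding CBA_def by blast
  have "alg_of_preorder W r = ralg W (rk W r)"
    unfolding alg_of_preorder_def ralg_def
  proof (intro set_eqI iffI; clarsimp)
    fix U V a assume "U \<subseteq> W" "V \<subseteq> W" "a\<in>U" "\<forall>b\<in>V. (a,b)\<in>r \<and> (b,a)\<notin>r"
    then show "\<exists>a\<in>U. \<forall>b\<in>V. rk W r a < rk W r b"
      using rk_less_iff[OF r(1) assms(1)] by blast
  next
    fix U V a assume "U \<subseteq> W" "V \<subseteq> W" "a\<in>U" "\<forall>b\<in>V. rk W r a < rk W r b"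
    then show "\<exists>a\<in>U. \<forall>b\<in>V. (a,b)\<in>r \<and> (b,a)\<notin>r"
      using rk_less_iff[OF r(1) assms(1)] by blast
  qed
  then show ?thesis using r by blast
qed

lemma ralg_ba:
  assumes "finite W" shows "belief_algebra W (ralg W f)"
  unfolding belief_algebra_def
proof (intro conjI allI impI)
  show "ralg W f \<subseteq> R_W W" unfolding ralg_def R_W_def by auto
next
  fix U :: "'a set" assume "U \<subseteq> W"
  then show "((U, {}) \<in> ralg W f) = (U \<noteq> {})" unfolding ralg_def by auto
next
  fix U V assume "(U,V) \<in> ralg W f"
  then show "(V,U) \<notin> ralg W f" unfolding ralg_def by (auto, meson less_asym)
next
  fix U V U1 V1 :: "'a set"
  assume "U1 \<subseteq> W" "V1 \<subseteq> W" "U \<subseteq> U1" "(U,V) \<in> ralg W f" "V1 \<subseteq> V" "U1 \<inter> V1 = {}"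
  then show "(U1,V1) \<in> ralg W f" unfolding ralg_def by blast
next
  fix U U1 V1 U2 V2 :: "'a set"
  assume a: "U \<subseteq> W" "U1 \<subseteq> W" "V1 \<subseteq> W" "U2 \<subseteq> W" "V2 \<subseteq> W"
    "U = U1 \<union> V1" "U = U2 \<union> V2" "(U1,V1) \<in> ralg W f" "(U2,V2) \<in> ralg W f"
  obtain a1 where a1: "a1\<in>U1" "\<forall>b\<in>V1. f a1 < f b" using a(8) unfolding ralg_def by blast
  obtain a2 where a2: "a2\<in>U2" "\<forall>b\<in>V2. f a2 < f b" using a(9) unfolding ralg_def by blast
  have d1: "U1 \<inter> V1 = {}" using a(8) unfolding ralg_def by blast
  have d2: "U2 \<inter> V2 = {}" using a(9) unfolding ralg_def by blast
  have fin: "finite U" using a(1) assms finite_subset by blast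
  have ne: "U \<noteq> {}" using a1(1) a(6) by blast
  define k where "k = Min (f ` U)"
  have "k \<in> f ` U" unfolding k_def using fin ne by (intro Min_in) auto
  then obtain m where m: "m \<in> U" "f m = k" by blast
  have mle: "\<forall>u\<in>U. k \<le> f u" using fin k_def by auto
  have m1: "m \<in> U1"
  proof (rule ccontr)
    assume "m \<notin> U1"
    then have "m \<in> V1" using a(6) m(1) by blast
    then have "f a1 < f m" using a1 by blast
    moreover have "f m \<le> f a1" using mle m a1 a(6) by auto
    ultimately show False by simp
  qed
  have m2: "m \<in> U2"
  proof (rule ccontr)
    assume "m \<notin> U2"
    then have "m \<in> V2" using a(7) m(1) by blast
    then have "f a2 < f m" using a2 by blast
    moreover have "f m \<le> f a2" using mle m a2 a(7) by auto
    ultimately show False by simp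
  qed
  have "\<forall>b\<in>V1 \<union> V2. f m < f b"
  proof
    fix b assume "b \<in> V1 \<union> V2"
    then show "f m < f b"
    proof
      assume "b \<in> V1"
      moreover have "f m \<le> f a1" using mle m a1 a(6) by auto
      ultimately show ?thesis using a1 by fastforce
    next
      assume "b \<in> V2"
      moreover have "f m \<le> f a2" using mle m a2 a(7) by auto
      ultimately show ?thesis using a2 by fastforce
    qed
  qed
  moreover have "U1 \<inter> U2 \<subseteq> W" "V1 \<union> V2 \<subseteq> W" "U1 \<inter> U2 \<inter> (V1 \<union> V2) = {}"
    using a(2-5) d1 d2 by blast+
  ultimately show "(U1 \<inter> U2, V1 \<union> V2) \<in> ralg W f" using m1 m2 unfolding ralg_def by blast
qed

lemma cba_ba: "finite W \<Longrightarrow> CBA W G \<Longrightarrow> belief_algebra W G"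
  using cba_ralg ralg_ba by blast

lemma bb_exists:
  assumes "finite W" shows "is_backbone W (ralg W f) (Cs W f)"
proof -
  define ks where "ks = sorted_list_of_set (f ` W)"
  have fin: "finite (f ` W)" using assms by auto
  have sks: "sorted_wrt (<) ks" unfolding ks_def by (rule strict_sorted_list_of_set)
  have setks: "set ks = f ` W" unfolding ks_def using fin by simp
  have dks: "distinct ks" using sks strict_sorted_iff by blast
  have C: "Cs W f = map (\<lambda>k. {w\<in>W. f w = k}) ks" unfolding Cs_def ks_def ..
  have nth: "\<And>i. i < length ks \<Longrightarrow> Cs W f ! i = {w\<in>W. f w = ks!i}" unfolding C by simp
  have inW: "\<And>i. i < length ks \<Longrightarrow> ks ! i \<in> f ` W" using setks nth_mem by blast
  have len: "length (Cs W f) = length ks" unfolding C by simp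
  have noinc: "(X, Y) \<notin> ralg W f" if hh: "\<forall>x\<in>X. f x = k" "\<forall>y\<in>Y. f y = k" "Y \<noteq> {}" for X Y k
  proof
    assume "(X, Y) \<in> ralg W f"
    then obtain a where a: "a\<in>X" "\<forall>b\<in>Y. f a < f b" unfolding ralg_def by blast
    obtain b where b: "b \<in> Y" using hh(3) by blast
    have "f a < f b" using a b by blast
    moreover have "f a = k" "f b = k" using hh(1,2) a(1) b by blast+
    ultimately show False by simp
  qed
  show ?thesis unfolding is_backbone_def
  proof (intro conjI allI impI)
    fix i assume "i < length (Cs W f)"
    then have i: "i < length ks" using len by simp
    then have "ks!i \<in> f ` W" by (rule inW)
    then obtain w where w: "w\<in>W" "f w = ks!i" by (metis imageE)
    then have "w \<in> Cs W f ! i" using nth[OF i] by simp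
    then show "Cs W f ! i \<noteq> {}" by blast
  next
    fix i j assume ij: "i < length (Cs W f)" "j < length (Cs W f)" "i \<noteq> j"
    then have i: "i < length ks" and j: "j < length ks" using len by simp_all
    have "ks!i \<noteq> ks!j" using dks i j ij(3) by (simp add: nth_eq_iff_index_eq)
    then show "Cs W f ! i \<inter> Cs W f ! j = {}" unfolding nth[OF i] nth[OF j] by auto
  next
    have "\<Union> (set (Cs W f)) = (\<Union>k\<in>set ks. {w\<in>W. f w = k})" unfolding C by simp
    also have "\<dots> = W" unfolding setks by blast
    finally show "\<Union> (set (Cs W f)) = W" .
  next
    fix i assume "Suc i < length (Cs W f)"
    then have si: "Suc i < length ks" and i: "i < length ks" using len by simp_all
    have lt: "ks!i < ks!Suc i" using sks si by (simp add: sorted_wrt_iff_nth_less)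
    have "ks!i \<in> f ` W" using i by (rule inW)
    then obtain a where a: "a\<in>W" "f a = ks!i" by (metis imageE)
    have "a \<in> {w\<in>W. f w = ks!i}" using a by simp
    moreover have "\<forall>b\<in>{w\<in>W. f w = ks!Suc i}. f a < f b" using a lt by simp
    moreover have "{w\<in>W. f w = ks!i} \<inter> {w\<in>W. f w = ks!Suc i} = {}" using lt by auto
    ultimately show "(Cs W f ! i, Cs W f ! Suc i) \<in> ralg W f"
      unfolding nth[OF i] nth[OF si] ralg_def by blast
  next
    fix i X Y assume i0: "i < length (Cs W f)" and xy: "X \<subseteq> Cs W f ! i" "Y \<subseteq> Cs W f ! i"
      "X \<noteq> {}" "Y \<noteq> {}" "X \<inter> Y = {}"
    then have i: "i < length ks" using len by simp
    have "\<forall>x\<in>X. f x = ks!i" "\<forall>y\<in>Y. f y = ks!i" using xy(1,2) unfolding nth[OF i] by blast+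
    then show "(X, Y) \<notin> ralg W f" using noinc xy(4) by blast
  next
    fix i X Y assume i0: "i < length (Cs W f)" and xy: "X \<subseteq> Cs W f ! i" "Y \<subseteq> Cs W f ! i"
      "X \<noteq> {}" "Y \<noteq> {}" "X \<inter> Y = {}"
    then have i: "i < length ks" using len by simp
    have "\<forall>x\<in>X. f x = ks!i" "\<forall>y\<in>Y. f y = ks!i" using xy(1,2) unfolding nth[OF i] by blast+
    then show "(Y, X) \<notin> ralg W f" using noinc xy(3) by blast
  qed
qed

lemma bb_unique:
  assumes "finite W" "is_backbone W (ralg W f) Us" shows "Us = Cs W f"
proof -
  define n where "n = length Us"
  note bb = assms(2)[unfolded is_backbone_def, folded n_def]
  note ne = bb[THEN conjunct1]
  note un = bb[THEN conjunct2, THEN conjunct2, THEN conjunct1]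
  note cons = bb[THEN conjunct2, THEN conjunct2, THEN conjunct2, THEN conjunct1]
  note inc = bb[THEN conjunct2, THEN conjunct2, THEN conjunct2, THEN conjunct2]
  have sub: "\<And>i. i<n \<Longrightarrow> Us!i \<subseteq> W" using un n_def nth_mem by blast
  have same: "\<And>i a b. i<n \<Longrightarrow> a\<in>Us!i \<Longrightarrow> b\<in>Us!i \<Longrightarrow> f a = f b"
  proof -
    fix i a b assume h: "i<n" "a\<in>Us!i" "b\<in>Us!i"
    show "f a = f b"
    proof (cases "a = b")
      case False
      have ab: "a \<in> W" "b \<in> W" using sub[OF h(1)] h(2,3) by blast+
      have "({a},{b}) \<notin> ralg W f \<and> ({b},{a}) \<notin> ralg W f"
        using inc[rule_format, OF h(1), of "{a}" "{b}"] h(2,3) False by simp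
      moreover have "f a < f b \<Longrightarrow> ({a},{b}) \<in> ralg W f" using ab False unfolding ralg_def by auto
      moreover have "f b < f a \<Longrightarrow> ({b},{a}) \<in> ralg W f" using ab False unfolding ralg_def by auto
      ultimately show ?thesis by linarith
    qed simp
  qed
  define g where "g i = f (SOME a. a \<in> Us!i)" for i
  have gi: "\<And>i a. i<n \<Longrightarrow> a\<in>Us!i \<Longrightarrow> f a = g i"
  proof -
    fix i a assume h: "i<n" "a\<in>Us!i"
    have "(SOME a. a \<in> Us!i) \<in> Us!i" using h by (meson someI)
    then have "f a = f (SOME a. a \<in> Us!i)" using same[OF h(1) h(2)] by blast
    then show "f a = g i" unfolding g_def .
  qed
  have step: "\<And>i. Suc i < n \<Longrightarrow> g i < g (Suc i)"
  proof -
    fix i assume h: "Suc i < n"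
    obtain a where a: "a \<in> Us!i" "\<forall>b\<in>Us!Suc i. f a < f b" using cons h unfolding ralg_def by blast
    obtain b where b: "b \<in> Us!Suc i" using ne h by blast
    have "f a = g i" using gi[of i a] a(1) h by simp
    moreover have "f b = g (Suc i)" using gi[of "Suc i" b] b h by simp
    ultimately show "g i < g (Suc i)" using a(2) b by metis
  qed
  have mono: "\<And>i j. i<j \<Longrightarrow> j<n \<Longrightarrow> g i < g j"
  proof -
    fix i j show "i<j \<Longrightarrow> j<n \<Longrightarrow> g i < g j"
    proof (induction j)
      case (Suc j)
      have s: "g j < g (Suc j)" using step Suc.prems(2) by blast
      show ?case
      proof (cases "i = j")
        case True then show ?thesis using s by simp
      next
        case False
        then have "i < j" using Suc.prems(1) by simp
        then have "g i < g j" using Suc.IH Suc.prems(2) by simp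
        then show ?thesis using s by simp
      qed
    qed simp
  qed
  have inj: "\<And>i j. i<n \<Longrightarrow> j<n \<Longrightarrow> g i = g j \<Longrightarrow> i = j"
    using mono by (metis linorder_neqE_nat less_irrefl)
  have cover: "\<And>w. w\<in>W \<Longrightarrow> \<exists>j<n. w \<in> Us!j" using un n_def by (metis Union_iff in_set_conv_nth)
  have blk: "\<And>i. i<n \<Longrightarrow> Us!i = {w\<in>W. f w = g i}"
  proof -
    fix i assume i: "i<n"
    show "Us!i = {w\<in>W. f w = g i}"
    proof
      show "Us!i \<subseteq> {w\<in>W. f w = g i}" using sub i gi by blast
      show "{w\<in>W. f w = g i} \<subseteq> Us!i"
      proof
        fix w assume w: "w \<in> {w\<in>W. f w = g i}"
        then obtain j where j: "j<n" "w\<in>Us!j" using cover by blast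
        then have "g j = g i" using gi w by force
        then show "w \<in> Us!i" using inj i j by blast
      qed
    qed
  qed
  have ks: "sorted_list_of_set (f ` W) = map g [0..<n]"
  proof -
    have fin: "finite (f ` W)" using assms by auto
    have s: "sorted_wrt (<) (map g [0..<n])" by (simp add: sorted_wrt_iff_nth_less mono)
    have st: "set (map g [0..<n]) = f ` W"
    proof
      show "set (map g [0..<n]) \<subseteq> f ` W"
      proof
        fix x assume "x \<in> set (map g [0..<n])"
        then obtain i where i: "i<n" "x = g i" by auto
        obtain a where "a\<in>Us!i" using ne i by blast
        then show "x \<in> f ` W" using gi sub i by (metis image_eqI subsetD)
      qed
      show "f ` W \<subseteq> set (map g [0..<n])"
      proof
        fix x assume "x \<in> f ` W"
        then obtain w where w: "w\<in>W" "x = f w" by blast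
        then obtain j where "j<n" "w\<in>Us!j" using cover by blast
        then show "x \<in> set (map g [0..<n])" using gi w by auto
      qed
    qed
    have d: "distinct (map g [0..<n])" using s strict_sorted_iff by blast
    have "length (map g [0..<n]) = card (f ` W)" using d st distinct_card by fastforce
    then show ?thesis using sorted_list_of_set_unique[OF fin] s st by blast
  qed
  show ?thesis unfolding Cs_def ks
    by (rule nth_equalityI) (auto simp: n_def blk)
qed

lemma backbone_ralg: "finite W \<Longrightarrow> backbone W (ralg W f) = Cs W f"
  unfolding backbone_def using bb_exists bb_unique by (metis the_equality)

lemma ralg_support:
  assumes "finite W" "w \<in> W" shows "support W (ralg W f) {w} = {v\<in>W. f v = f w}"
proof -
  define ks where "ks = sorted_list_of_set (f ` W)"
  have C: "Cs W f = map (\<lambda>k. {w\<in>W. f w = k}) ks" unfolding Cs_def ks_def ..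
  have "f w \<in> set ks" unfolding ks_def using assms by auto
  then obtain i where i: "i < length ks" "ks!i = f w" by (metis in_set_conv_nth)
  let ?P = "\<lambda>i. i < length (Cs W f) \<and> {w} \<inter> Cs W f ! i \<noteq> {}"
  have "?P i" using i C assms by auto
  then have "?P (LEAST i. ?P i)" by (rule LeastI)
  then show ?thesis unfolding support_def backbone_ralg[OF assms(1)] Let_def using C by auto
qed

lemma ba_R:
  assumes "belief_algebra W G" "(U,V) \<in> G" shows "U \<subseteq> W" "V \<subseteq> W" "U \<inter> V = {}"
proof -
  have "G \<subseteq> R_W W" using assms(1) unfolding belief_algebra_def by (rule conjunct1)
  then have "(U,V) \<in> R_W W" using assms(2) by (rule subsetD)
  then show "U \<subseteq> W" "V \<subseteq> W" "U \<inter> V = {}" unfolding R_W_def by simp_all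
qed

lemma ba_A1:
  assumes "belief_algebra W G" "U \<subseteq> W" "U \<noteq> {}" shows "(U,{}) \<in> G"
proof -
  note x = assms(1)[unfolded belief_algebra_def, THEN conjunct2, THEN conjunct1, rule_format, OF assms(2)]
  show ?thesis using x assms(3) by simp
qed

lemma ba_A3:
  assumes "belief_algebra W G" "U \<subseteq> W" "V \<subseteq> W" "U1 \<subseteq> W" "V1 \<subseteq> W"
    "U \<subseteq> U1" "(U, V) \<in> G" "V1 \<subseteq> V" "U1 \<inter> V1 = {}"
  shows "(U1,V1) \<in> G"
proof -
  note x = assms(1)[unfolded belief_algebra_def, THEN conjunct2, THEN conjunct2, THEN conjunct2, THEN conjunct1]
  show ?thesis by (rule x[rule_format, OF assms(2-9)])
qed

lemma ba_A4:
  assumes "belief_algebra W G" "U \<subseteq> W" "U1 \<subseteq> W" "V1 \<subseteq> W" "U2 \<subseteq> W" "V2 \<subseteq> W"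
    "U = U1 \<union> V1" "U = U2 \<union> V2" "(U1, V1) \<in> G" "(U2, V2) \<in> G"
  shows "(U1 \<inter> U2, V1 \<union> V2) \<in> G"
proof -
  note x = assms(1)[unfolded belief_algebra_def, THEN conjunct2, THEN conjunct2, THEN conjunct2, THEN conjunct2]
  show ?thesis by (rule x[rule_format, OF assms(2-10)])
qed

lemma gen_sub:
  assumes "p \<in> Gen W \<Omega>" "\<Omega> \<subseteq> G" "belief_algebra W G" shows "p \<in> G"
  using assms(1)
proof (induction rule: Gen.induct)
  case (base p) then show ?case using assms(2) by blast
next
  case (empty U) then show ?case using ba_A1[OF assms(3)] by blast
next
  case (mono U V U1 V1)
  have "U \<subseteq> W" "V \<subseteq> W" using ba_R[OF assms(3) mono.IH] by simp_all
  moreover have "V1 \<subseteq> W" using mono.hyps(4) \<open>V \<subseteq> W\<close> by blast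
  ultimately show ?case using ba_A3[OF assms(3)] mono by blast
next
  case (meet U1 V1 U2 V2)
  have w: "U1 \<subseteq> W" "V1 \<subseteq> W" "U2 \<subseteq> W" "V2 \<subseteq> W"
    using ba_R[OF assms(3) meet.IH(1)] ba_R[OF assms(3) meet.IH(2)] by simp_all
  have "U1 \<union> V1 \<subseteq> W" using w by blast
  then show ?case
    by (rule ba_A4[OF assms(3) _ w(1,2,3,4) refl meet.hyps(1) meet.IH(1,2)])
qed

lemma gen_combine:
  assumes "finite V"
  shows "\<forall>U. a \<in> U \<longrightarrow> U \<subseteq> W \<longrightarrow> V \<subseteq> W \<longrightarrow> U \<inter> V = {} \<longrightarrow>
           (\<forall>v\<in>V. ({a},{v}) \<in> Gen W \<Omega>) \<longrightarrow> (U,V) \<in> Gen W \<Omega>"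
  using assms
proof (induction V rule: finite_induct)
  case empty
  then show ?case using Gen.empty by blast
next
  case (insert v V)
  show ?case
  proof (intro allI impI)
    fix U assume h: "a \<in> U" "U \<subseteq> W" "insert v V \<subseteq> W" "U \<inter> insert v V = {}"
      "\<forall>x\<in>insert v V. ({a},{x}) \<in> Gen W \<Omega>"
    have h1: "(U \<union> {v}, V) \<in> Gen W \<Omega>" using insert.IH h insert.hyps by auto
    have h2: "(U \<union> V, {v}) \<in> Gen W \<Omega>"
      by (rule Gen.mono[of "{a}" "{v}"]) (use h insert.hyps in auto)
    have h3: "((U \<union> {v}) \<inter> (U \<union> V), V \<union> {v}) \<in> Gen W \<Omega>"
      by (rule Gen.meet) (use h1 h2 in auto)
    have "(U \<union> {v}) \<inter> (U \<union> V) = U" "V \<union> {v} = insert v V" using insert.hyps by auto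
    then show "(U, insert v V) \<in> Gen W \<Omega>" using h3 by simp
  qed
qed

lemma ro_ba:
  assumes "revision_operator W rv" "belief_algebra W G1" "belief_algebra W G2"
  shows "belief_algebra W (rv G1 G2)"
  using assms(1)[unfolded revision_operator_def, THEN conjunct1, rule_format, OF assms(2,3)] .

lemma ro_RA1:
  assumes "revision_operator W rv" "belief_algebra W G1" "belief_algebra W G2"
  shows "G2 \<subseteq> rv G1 G2"
  using assms(1)[unfolded revision_operator_def, THEN conjunct2, THEN conjunct1,
      unfolded RA1_def, rule_format, OF assms(2,3)] .

lemma ro_RA3:
  assumes "revision_operator W rv" "CBA W G1" "CBA W G2"
  shows "CBA W (rv G1 G2)"
  using assms(1)[unfolded revision_operator_def, THEN conjunct2, THEN conjunct2, THEN conjunct2,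
      THEN conjunct1, unfolded RA3_def, rule_format, OF assms(2,3)] .

lemma ro_RA4:
  assumes "revision_operator W rv" "CBA W G1" "CBA W G2" "w\<in>W" "w'\<in>W"
    "support W G2 {w} = support W G2 {w'}"
  shows "({w}, {w'}) \<in> rv G1 G2 \<longleftrightarrow> ({w}, {w'}) \<in> G1"
  using assms(1)[unfolded revision_operator_def, THEN conjunct2, THEN conjunct2, THEN conjunct2,
      THEN conjunct2, unfolded RA4_def, rule_format, OF assms(2-6)] .

lemma main:
  assumes fin: "finite W" and rv: "revision_operator W rv" and c1: "CBA W G1" and c2: "CBA W G2"
  shows "rv G1 G2 = Gen W (Lambda W G1 G2 \<union> G2)"
proof -
  let ?\<rho> = "rv G1 G2"
  let ?Gn = "Gen W (Lambda W G1 G2 \<union> G2)"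
  have ba1: "belief_algebra W G1" using cba_ba fin c1 by blast
  have ba2: "belief_algebra W G2" using cba_ba fin c2 by blast
  have bar: "belief_algebra W ?\<rho>" by (rule ro_ba[OF rv ba1 ba2])
  obtain f2 where f2: "G2 = ralg W f2" using cba_ralg fin c2 by blast
  have cr: "CBA W ?\<rho>" by (rule ro_RA3[OF rv c1 c2])
  obtain h where h: "?\<rho> = ralg W h" using cba_ralg fin cr by blast
  have G2sub: "G2 \<subseteq> ?\<rho>" by (rule ro_RA1[OF rv ba1 ba2])
  have Lsub: "Lambda W G1 G2 \<subseteq> ?\<rho>"
  proof
    fix p assume "p \<in> Lambda W G1 G2"
    then obtain w w' where ww: "p = ({w},{w'})" "w \<in> W" "w' \<in> W" "({w},{w'}) \<in> G1"
      "support W G2 {w} = support W G2 {w'}" unfolding Lambda_def by blast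
    show "p \<in> ?\<rho>" using ro_RA4[OF rv c1 c2 ww(2,3,5)] ww(1,4) by simp
  qed
  have LG: "Lambda W G1 G2 \<union> G2 \<subseteq> ?\<rho>" using Lsub G2sub by (rule Un_least)
  show ?thesis
  proof
    show "?Gn \<subseteq> ?\<rho>"
    proof
      fix p assume "p \<in> ?Gn"
      then show "p \<in> ?\<rho>" by (rule gen_sub[OF _ LG bar])
    qed
  next
    show "?\<rho> \<subseteq> ?Gn"
    proof
      fix p assume p: "p \<in> ?\<rho>"
      obtain U V where UV: "p = (U,V)" by force
      have "(U,V) \<in> ralg W h" using p UV h by simp
      then obtain a where a: "U \<subseteq> W" "V \<subseteq> W" "U \<inter> V = {}" "a\<in>U" "\<forall>b\<in>V. h a < h b"
        unfolding ralg_def by blast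
      have single: "({a},{b}) \<in> ?Gn" if b: "b \<in> V" for b
      proof -
        have aW: "a \<in> W" "b \<in> W" using a(1,2,4) b by auto
        have hab: "h a < h b" using a(5) b by blast
        have inr: "({a},{b}) \<in> ralg W h" using aW hab unfolding ralg_def by auto
        then have inr': "({a},{b}) \<in> ?\<rho>" using h by simp
        show ?thesis
        proof (cases "support W G2 {a} = support W G2 {b}")
          case True
          then have "({a},{b}) \<in> G1" using ro_RA4[OF rv c1 c2 aW True] inr' by simp
          then have "({a},{b}) \<in> Lambda W G1 G2" unfolding Lambda_def using aW True by blast
          then show ?thesis by (blast intro: Gen.base)
        next
          case False
          have sa: "support W G2 {a} = {v\<in>W. f2 v = f2 a}" unfolding f2 by (rule ralg_support[OF fin aW(1)])
          have sb: "support W G2 {b} = {v\<in>W. f2 v = f2 b}" unfolding f2 by (rule ralg_support[OF fin aW(2)])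
          have "f2 a \<noteq> f2 b"
          proof
            assume "f2 a = f2 b"
            then have "support W G2 {a} = support W G2 {b}" unfolding sa sb by simp
            then show False using False by simp
          qed
          moreover have "\<not> f2 b < f2 a"
          proof
            assume "f2 b < f2 a"
            then have "({b},{a}) \<in> G2" unfolding f2 ralg_def using aW hab by auto
            then have "({b},{a}) \<in> ralg W h" using G2sub h by auto
            then have "h b < h a" unfolding ralg_def by auto
            then show False using hab by simp
          qed
          ultimately have "f2 a < f2 b" by linarith
          then have "({a},{b}) \<in> G2" unfolding f2 ralg_def using aW by auto
          then show ?thesis by (blast intro: Gen.base)
        qed
      qed
      have fv: "finite V" using a(2) fin finite_subset by blast
      have "(U,V) \<in> ?Gn"
        using gen_combine[of V a W "Lambda W G1 G2 \<union> G2", OF fv, rule_format, OF a(4) a(1) a(2) a(3)]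
          single by blast
      then show "p \<in> ?Gn" using UV by simp
    qed
  qed
qed

theorem theorem4:
  fixes W :: "'a set" and rv :: "'a balg \<Rightarrow> 'a balg \<Rightarrow> 'a balg" and G1 G2 :: "'a balg"
  assumes "finite W" and "W \<noteq> {}"
    and "revision_operator W rv"
    and "CBA W G1" and "CBA W G2"
  shows "rv G1 G2 = Gen W (Lambda W G1 G2 \<union> G2) \<and>
         (\<forall>rv'. revision_operator W rv' \<longrightarrow> rv' G1 G2 = rv G1 G2)"
proof
  show "rv G1 G2 = Gen W (Lambda W G1 G2 \<union> G2)" by (rule main[OF assms(1,3,4,5)])
  show "\<forall>rv'. revision_operator W rv' \<longrightarrow> rv' G1 G2 = rv G1 G2"
  proof (intro allI impI)
    fix rv' assume "revision_operator W rv'"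
    then have "rv' G1 G2 = Gen W (Lambda W G1 G2 \<union> G2)" by (rule main[OF assms(1) _ assms(4,5)])
    moreover have "rv G1 G2 = Gen W (Lambda W G1 G2 \<union> G2)" by (rule main[OF assms(1,3,4,5)])
    ultimately show "rv' G1 G2 = rv G1 G2" by simp
  qed
qed

end
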